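(* Let $\Sigma$ be a finite alphabet, $m,n$ positive integers with $m\le n$, and $r$ an $(m,n)$-ranker. There is a sentence $\varphi_r\in\mathrm{FO}^2_{m,n}[<]$ such that for all $w\in\Sigma^\star$, $w\models\varphi_r$ iff $r(w)$ is defined.
   Context: Words are finite structures with universe $\{1,\dots,|w|\}$, unary predicates $Q_a$ ($a\in\Sigma$) marking positions carrying $a$, and the order $<$. $\mathrm{FO}^2_n[<]$ is first-order logic over this signature using only the variables $x,y$, with quantifier depth at most $n$; $\mathrm{FO}^2_{m,n}[<]$ is the set of its formulas in which every path in the parse tree has at most $m$ blocks of alternating quantifiers. Boundary positions: $\triangleright_a(w)=\min\{i:w_i=a\}$, $\triangleleft_a(w)=\max\{i:w_i=a\}$, $\triangleright_a(w,q)=\min\{i\in[q+1,|w|]:w_i=a\}$, $\triangleleft_a(w,q)=\max\{i\in[1,q-1]:w_i=a\}$ (undefined if empty); $\triangleright,\triangleleft$ are directions. An $n$-ranker is a sequence $r=(p_1,\dots,p_n)$ of boundary positions with $r(w)=p_1(w)$ if $n=1$, undefined if $(p_1,\dots,p_{n-1})(w)$ is undefined, else $p_n(w,(p_1,\dots,p_{n-1})(w))$. An $(m,n)$-ranker is an $n$-ranker whose sequence of directions consists of exactly $m$ maximal blocks of equal direction. *)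

theory Defs
  imports Main
begin

text \<open>A word is a list; its positions are 1..length w, and position i carries w ! (i-1).\<close>

definition letter_at :: "'a list \<Rightarrow> nat \<Rightarrow> 'a" where
  "letter_at w i = w ! (i - 1)"

datatype var = VX | VY

datatype quant = QEx | QAll

text \<open>Formulas in negation normal form (negation only in front of atoms).\<close>
datatype 'a fo2 =
    FTrue | FFalse
  | Letter 'a var | NLetter 'a var
  | Less var var | NLess var var
  | Eq var var | NEq var var
  | And "'a fo2" "'a fo2" | Or "'a fo2" "'a fo2"
  | Ex var "'a fo2" | All var "'a fo2"

fun sat :: "'a list \<Rightarrow> (var \<Rightarrow> nat) \<Rightarrow> 'a fo2 \<Rightarrow> bool" where
  "sat w v FTrue = True"
| "sat w v FFalse = False"
| "sat w v (Letter a x) = (letter_at w (v x) = a)"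
| "sat w v (NLetter a x) = (letter_at w (v x) \<noteq> a)"
| "sat w v (Less x y) = (v x < v y)"
| "sat w v (NLess x y) = (\<not> v x < v y)"
| "sat w v (Eq x y) = (v x = v y)"
| "sat w v (NEq x y) = (v x \<noteq> v y)"
| "sat w v (And f g) = (sat w v f \<and> sat w v g)"
| "sat w v (Or f g) = (sat w v f \<or> sat w v g)"
| "sat w v (Ex x f) = (\<exists>i\<in>{1..length w}. sat w (v(x := i)) f)"
| "sat w v (All x f) = (\<forall>i\<in>{1..length w}. sat w (v(x := i)) f)"

fun free_vars :: "'a fo2 \<Rightarrow> var set" where
  "free_vars FTrue = {}"
| "free_vars FFalse = {}"
| "free_vars (Letter a x) = {x}"
| "free_vars (NLetter a x) = {x}"
| "free_vars (Less x y) = {x, y}"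
| "free_vars (NLess x y) = {x, y}"
| "free_vars (Eq x y) = {x, y}"
| "free_vars (NEq x y) = {x, y}"
| "free_vars (And f g) = free_vars f \<union> free_vars g"
| "free_vars (Or f g) = free_vars f \<union> free_vars g"
| "free_vars (Ex x f) = free_vars f - {x}"
| "free_vars (All x f) = free_vars f - {x}"

definition sentence :: "'a fo2 \<Rightarrow> bool" where
  "sentence f \<longleftrightarrow> free_vars f = {}"

text \<open>Truth of a sentence in a word (the valuation is irrelevant for sentences).\<close>
definition models :: "'a list \<Rightarrow> 'a fo2 \<Rightarrow> bool" where
  "models w f \<longleftrightarrow> sat w (\<lambda>_. 0) f"

fun qdepth :: "'a fo2 \<Rightarrow> nat" where
  "qdepth (And f g) = max (qdepth f) (qdepth g)"
| "qdepth (Or f g) = max (qdepth f) (qdepth g)"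
| "qdepth (Ex x f) = Suc (qdepth f)"
| "qdepth (All x f) = Suc (qdepth f)"
| "qdepth _ = 0"

text \<open>Maximal number of blocks of alternating quantifiers along a path of the parse tree;
  the first argument is the kind of the last quantifier seen above on the path.\<close>
fun qblocks_aux :: "quant option \<Rightarrow> 'a fo2 \<Rightarrow> nat" where
  "qblocks_aux q (And f g) = max (qblocks_aux q f) (qblocks_aux q g)"
| "qblocks_aux q (Or f g) = max (qblocks_aux q f) (qblocks_aux q g)"
| "qblocks_aux q (Ex x f) = (if q = Some QEx then 0 else 1) + qblocks_aux (Some QEx) f"
| "qblocks_aux q (All x f) = (if q = Some QAll then 0 else 1) + qblocks_aux (Some QAll) f"
| "qblocks_aux q _ = 0"

definition qblocks :: "'a fo2 \<Rightarrow> nat" where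
  "qblocks f = qblocks_aux None f"

definition FO2_mn :: "nat \<Rightarrow> nat \<Rightarrow> 'a fo2 set" where
  "FO2_mn m n = {f. qdepth f \<le> n \<and> qblocks f \<le> m}"

datatype dir = DRight | DLeft  \<comment> \<open>DRight = \<triangleright>, DLeft = \<triangleleft>\<close>

type_synonym 'a bpos = "dir \<times> 'a"
type_synonym 'a ranker = "'a bpos list"

definition opt_min :: "nat set \<Rightarrow> nat option" where
  "opt_min S = (if S = {} then None else Some (Min S))"

definition opt_max :: "nat set \<Rightarrow> nat option" where
  "opt_max S = (if S = {} then None else Some (Max S))"

fun bpos_abs :: "'a list \<Rightarrow> 'a bpos \<Rightarrow> nat option" where
  "bpos_abs w (DRight, a) = opt_min {i\<in>{1..length w}. letter_at w i = a}"
| "bpos_abs w (DLeft, a) = opt_max {i\<in>{1..length w}. letter_at w i = a}"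

fun bpos_rel :: "'a list \<Rightarrow> 'a bpos \<Rightarrow> nat \<Rightarrow> nat option" where
  "bpos_rel w (DRight, a) q = opt_min {i\<in>{q+1..length w}. letter_at w i = a}"
| "bpos_rel w (DLeft, a) q = opt_max {i\<in>{1..q-1}. letter_at w i = a}"

fun ranker_eval :: "'a list \<Rightarrow> 'a ranker \<Rightarrow> nat option" where
  "ranker_eval w [] = None"
| "ranker_eval w (p # ps) =
     foldl (\<lambda>acc q. Option.bind acc (bpos_rel w q)) (bpos_abs w p) ps"

definition dir_blocks :: "'a ranker \<Rightarrow> nat" where
  "dir_blocks r = length (remdups_adj (map fst r))"

definition is_mn_ranker :: "nat \<Rightarrow> nat \<Rightarrow> 'a ranker \<Rightarrow> bool" where
  "is_mn_ranker m n r \<longleftrightarrow> length r = n \<and> dir_blocks r = m"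

end

theory Submission
  imports Defs
begin

fun other :: "var \<Rightarrow> var" where "other VX = VY" | "other VY = VX"

fun lt :: "dir \<Rightarrow> var \<Rightarrow> var \<Rightarrow> 'a fo2" where
  "lt DRight u v = Less u v" | "lt DLeft u v = Less v u"

fun ltd :: "dir \<Rightarrow> nat \<Rightarrow> nat \<Rightarrow> bool" where
  "ltd DRight p i = (p < i)" | "ltd DLeft p i = (i < p)"

fun neg :: "'a fo2 \<Rightarrow> 'a fo2" where
  "neg FTrue = FFalse" | "neg FFalse = FTrue"
| "neg (Letter a x) = NLetter a x" | "neg (NLetter a x) = Letter a x"
| "neg (Less x y) = NLess x y" | "neg (NLess x y) = Less x y"
| "neg (Eq x y) = NEq x y" | "neg (NEq x y) = Eq x y"
| "neg (And f g) = Or (neg f) (neg g)" | "neg (Or f g) = And (neg f) (neg g)"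
| "neg (Ex x f) = All x (neg f)" | "neg (All x f) = Ex x (neg f)"

lemma sat_neg[simp]: "sat w v (neg f) = (\<not> sat w v f)"
  by (induction f arbitrary: v) auto

lemma qdepth_neg[simp]: "qdepth (neg f) = qdepth f"
  by (induction f) auto

lemma fv_neg[simp]: "free_vars (neg f) = free_vars f"
  by (induction f) auto

lemma qb_neg: "qblocks_aux (Some QEx) (neg f) = qblocks_aux (Some QAll) f \<and>
               qblocks_aux (Some QAll) (neg f) = qblocks_aux (Some QEx) f"
  by (induction f) auto

lemma lt_simps[simp]: "sat w v (lt d x y) = ltd d (v x) (v y)"
  "qdepth (lt d x y) = 0" "qblocks_aux q (lt d x y) = 0" "free_vars (lt d x y) = {x, y}"
  by (cases d; auto)+

fun fm :: "dir \<Rightarrow> 'a bpos list \<Rightarrow> var \<Rightarrow> dir \<Rightarrow> 'a fo2" where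
  "fm d0 [] z k = (if k = d0 then FTrue else FFalse)"
| "fm d0 ((d,a)#rs) z k = (if k = d
     then Ex (other z) (And (lt d (other z) z) (And (Letter a (other z)) (fm d0 rs (other z) d)))
     else And (Ex (other z) (And (Letter a (other z)) (fm d0 rs (other z) d)))
              (All (other z) (Or (lt d z (other z)) (Or (NLetter a (other z)) (neg (fm d0 rs (other z) d))))))"

fun ev :: "dir \<Rightarrow> 'a list \<Rightarrow> 'a bpos list \<Rightarrow> nat option" where
  "ev d0 w [] = Some (if d0 = DRight then 0 else length w + 1)"
| "ev d0 w (p#rs) = Option.bind (ev d0 w rs) (bpos_rel w p)"

definition sem :: "nat option \<Rightarrow> dir \<Rightarrow> nat \<Rightarrow> bool" where
  "sem P k i = (\<exists>p. P = Some p \<and> ltd k p i)"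

lemma fv_fm: "free_vars (fm d0 rs z k) \<subseteq> {z}"
proof (induction rs arbitrary: z k)
  case Nil then show ?case by simp
next
  case (Cons p rs)
  obtain d a where p: "p = (d,a)" by force
  have o: "other z \<noteq> z" by (cases z) auto
  have "free_vars (fm d0 rs (other z) d) \<subseteq> {other z}" using Cons by blast
  then show ?case using o by (auto simp: p)
qed

lemma depth_fm: "qdepth (fm d0 rs z k) \<le> length rs"
  by (induction rs arbitrary: z k) (auto simp: Let_def)

definition nb :: "'a bpos list \<Rightarrow> nat" where
  "nb rs = length (remdups_adj (map fst rs))"

definition hdd :: "dir \<Rightarrow> 'a bpos list \<Rightarrow> dir" where
  "hdd d0 rs = (case rs of [] \<Rightarrow> d0 | p # _ \<Rightarrow> fst p)"

lemma nb_Cons: "nb ((d,a)#rs) = (if rs \<noteq> [] \<and> d = hdd d0 rs then nb rs else Suc (nb rs))"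
  by (cases rs) (auto simp: nb_def hdd_def)

lemma nb_Nil[simp]: "nb [] = 0" by (simp add: nb_def)

lemma nb_pos: "rs \<noteq> [] \<Longrightarrow> nb rs \<ge> 1" by (simp add: nb_def)

lemma qb_fm: "qblocks_aux (Some QEx) (fm d0 rs z k) \<le> nb rs \<and>
              qblocks_aux (Some QAll) (fm d0 rs z k) \<le> nb rs \<and>
              qblocks_aux (Some QEx) (fm d0 rs z (hdd d0 rs)) \<le> nb rs - 1"
proof (induction rs arbitrary: z k)
  case Nil then show ?case by (simp add: hdd_def)
next
  case (Cons p rs)
  obtain d a where p: "p = (d,a)" by force
  define e where "e = qblocks_aux (Some QEx) (fm d0 rs (other z) d)"
  have e: "e \<le> nb ((d,a)#rs) - 1"
  proof (cases "rs \<noteq> [] \<and> d = hdd d0 rs")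
    case True
    then have "nb ((d,a)#rs) = nb rs" using nb_Cons[of d a rs d0] by simp
    then show ?thesis using True Cons.IH[of "other z"] unfolding e_def
      by simp
  next
    case False then show ?thesis using Cons.IH[of "other z" d] unfolding e_def
      by (simp add: nb_Cons[of d a rs d0])
  qed
  have pos: "nb ((d,a)#rs) \<ge> 1" by (rule nb_pos) simp
  have "hdd d0 ((d,a)#rs) = d" by (simp add: hdd_def)
  then show ?case using e pos qb_neg[of "fm d0 rs (other z) d"] unfolding p e_def
    by auto
qed

lemma other_neq[simp]: "other z \<noteq> z" "z \<noteq> other z" by (cases z; simp)+

lemma relR_Some: "bpos_rel w (DRight,a) q = Some s \<longleftrightarrow>
   (q < s \<and> s \<le> length w \<and> letter_at w s = a \<and> (\<forall>i. q < i \<and> i < s \<longrightarrow> letter_at w i \<noteq> a))"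
proof -
  let ?S = "{i\<in>{q+1..length w}. letter_at w i = a}"
  have fin: "finite ?S" by simp
  show ?thesis
  proof
    assume "bpos_rel w (DRight,a) q = Some s"
    then have ne: "?S \<noteq> {}" and s: "s = Min ?S" by (auto simp: opt_min_def split: if_splits)
    have "s \<in> ?S" using Min_in[OF fin ne] s by simp
    moreover have "\<forall>i. q < i \<and> i < s \<longrightarrow> letter_at w i \<noteq> a"
    proof (intro allI impI notI)
      fix i assume i: "q < i \<and> i < s" and l: "letter_at w i = a"
      then have "i \<in> ?S" using \<open>s \<in> ?S\<close> by auto
      then have "s \<le> i" using Min_le[OF fin] s by simp
      then show False using i by simp
    qed
    ultimately show "q < s \<and> s \<le> length w \<and> letter_at w s = a \<and> (\<forall>i. q < i \<and> i < s \<longrightarrow> letter_at w i \<noteq> a)"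
      by auto
  next
    assume h: "q < s \<and> s \<le> length w \<and> letter_at w s = a \<and> (\<forall>i. q < i \<and> i < s \<longrightarrow> letter_at w i \<noteq> a)"
    then have "s \<in> ?S" by auto
    moreover have "Min ?S = s"
    proof (rule Min_eqI[OF fin])
      fix y assume "y \<in> ?S"
      then show "s \<le> y" using h by (metis (mono_tags, lifting) Suc_eq_plus1 Suc_le_eq atLeastAtMost_iff mem_Collect_eq not_less)
    qed (use h in auto)
    ultimately show "bpos_rel w (DRight,a) q = Some s" by (auto simp: opt_min_def)
  qed
qed

lemma relR_None: "bpos_rel w (DRight,a) q = None \<longleftrightarrow>
   \<not>(\<exists>i. q < i \<and> i \<le> length w \<and> letter_at w i = a)"
  by (auto simp: opt_min_def)

lemma relL_Some: "bpos_rel w (DLeft,a) q = Some s \<longleftrightarrow>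
   (1 \<le> s \<and> s < q \<and> letter_at w s = a \<and> (\<forall>i. s < i \<and> i < q \<longrightarrow> letter_at w i \<noteq> a))"
proof -
  let ?S = "{i\<in>{1..q-1}. letter_at w i = a}"
  have fin: "finite ?S" by simp
  show ?thesis
  proof
    assume "bpos_rel w (DLeft,a) q = Some s"
    then have ne: "?S \<noteq> {}" and s: "s = Max ?S" by (auto simp: opt_max_def split: if_splits)
    have "s \<in> ?S" using Max_in[OF fin ne] s by simp
    moreover have "\<forall>i. s < i \<and> i < q \<longrightarrow> letter_at w i \<noteq> a"
    proof (intro allI impI notI)
      fix i assume i: "s < i \<and> i < q" and l: "letter_at w i = a"
      then have "i \<in> ?S" using \<open>s \<in> ?S\<close> by auto
      then have "i \<le> s" using Max_ge[OF fin] s by simp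
      then show False using i by simp
    qed
    ultimately show "1 \<le> s \<and> s < q \<and> letter_at w s = a \<and> (\<forall>i. s < i \<and> i < q \<longrightarrow> letter_at w i \<noteq> a)"
      by auto
  next
    assume h: "1 \<le> s \<and> s < q \<and> letter_at w s = a \<and> (\<forall>i. s < i \<and> i < q \<longrightarrow> letter_at w i \<noteq> a)"
    then have "s \<in> ?S" by auto
    moreover have "Max ?S = s"
      by (rule Max_eqI[OF fin]) (use h in \<open>auto simp: not_less[symmetric]\<close>)
    ultimately show "bpos_rel w (DLeft,a) q = Some s" by (auto simp: opt_max_def)
  qed
qed

lemma relL_None: "bpos_rel w (DLeft,a) q = None \<longleftrightarrow>
   \<not>(\<exists>i. 1 \<le> i \<and> i < q \<and> letter_at w i = a)"
  apply (auto simp: opt_max_def)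
  subgoal for x by (rule exI[of _ x]) auto
  done

lemma ev_bound: "ev d0 w rs = Some q \<Longrightarrow> q \<le> length w + 1"
proof (induction rs arbitrary: q)
  case Nil then show ?case by (auto split: if_splits)
next
  case (Cons p rs)
  obtain d a where p: "p = (d,a)" by force
  from Cons.prems obtain q' where q': "ev d0 w rs = Some q'" and r: "bpos_rel w (d,a) q' = Some q"
    by (cases "ev d0 w rs") (auto simp: p)
  show ?case using Cons.IH[OF q'] r
    by (cases d) (auto simp del: bpos_rel.simps simp: relR_Some relL_Some)
qed

declare bpos_rel.simps[simp del]

lemma sat_fm: "v z \<in> {1..length w} \<Longrightarrow> sat w v (fm d0 rs z k) = sem (ev d0 w rs) k (v z)"
proof (induction rs arbitrary: v z k)
  case Nil then show ?case by (cases d0; cases k) (auto simp: sem_def)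
next
  case (Cons p rs)
  obtain d a where p: "p = (d,a)" by force
  define ov where "ov = other z"
  define P where "P = ev d0 w rs"
  have IH: "\<And>i. i \<in> {1..length w} \<Longrightarrow> sat w (v(ov:=i)) (fm d0 rs ov d) = sem P d i"
    using Cons.IH unfolding P_def by simp
  have x: "v z \<in> {1..length w}" by fact
  have evc: "ev d0 w (p#rs) = Option.bind P (bpos_rel w (d,a))" by (simp add: p P_def)
  have fmc: "fm d0 (p#rs) z k = (if k = d
     then Ex ov (And (lt d ov z) (And (Letter a ov) (fm d0 rs ov d)))
     else And (Ex ov (And (Letter a ov) (fm d0 rs ov d)))
              (All ov (Or (lt d z ov) (Or (NLetter a ov) (neg (fm d0 rs ov d))))))"
    by (simp add: p ov_def)
  have ovz: "ov \<noteq> z" by (simp add: ov_def)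
  show ?case
  proof (cases P)
    case None
    have "\<not> sat w (v(ov:=i)) (fm d0 rs ov d)" if "i \<in> {1..length w}" for i
      using IH[OF that] None by (simp add: sem_def)
    then show ?thesis using None unfolding evc fmc
      by (auto simp: sem_def)
  next
    case (Some q)
    have qb: "q \<le> length w + 1" using ev_bound Some P_def by metis
    have IH': "\<And>i. i \<in> {1..length w} \<Longrightarrow> sat w (v(ov:=i)) (fm d0 rs ov d) = ltd d q i"
      using IH Some by (simp add: sem_def)
    define Q where "Q = bpos_rel w (d,a) q"
    have evQ: "Option.bind P (bpos_rel w (d,a)) = Q" by (simp add: Some Q_def)
    have xr: "1 \<le> v z" "v z \<le> length w" using x by auto
    show ?thesis
    proof (cases d)
      case DRight
      have none: "Q = None \<longleftrightarrow> \<not>(\<exists>i. q < i \<and> i \<le> length w \<and> letter_at w i = a)"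
        unfolding Q_def DRight by (rule relR_None)
      have some: "\<And>s. Q = Some s \<longleftrightarrow> (q < s \<and> s \<le> length w \<and> letter_at w s = a \<and> (\<forall>i. q < i \<and> i < s \<longrightarrow> letter_at w i \<noteq> a))"
        unfolding Q_def DRight by (rule relR_Some)
      have S: "\<And>i. i \<in> {1..length w} \<Longrightarrow> sat w (v(ov:=i)) (fm d0 rs ov d) = (q < i)"
        using IH' DRight by simp
      show ?thesis
      proof (cases k)
        case kR: DRight
        have "sat w v (fm d0 (p#rs) z k) = (\<exists>i\<in>{1..length w}. i < v z \<and> letter_at w i = a \<and> q < i)"
          unfolding fmc using kR DRight ovz S by auto
        also have "\<dots> = sem Q k (v z)"
        proof
          assume "\<exists>i\<in>{1..length w}. i < v z \<and> letter_at w i = a \<and> q < i"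
          then obtain i where i: "i \<in> {1..length w}" "i < v z" "letter_at w i = a" "q < i" by blast
          then obtain s where s: "Q = Some s" using none by fastforce
          have "s \<le> i"
          proof (rule ccontr)
            assume "\<not> s \<le> i"
            then have "i < s" by simp
            then show False using some[of s] s i by auto
          qed
          then show "sem Q k (v z)" using s i kR by (auto simp: sem_def)
        next
          assume "sem Q k (v z)"
          then obtain s where "Q = Some s" "s < v z" using kR by (auto simp: sem_def)
          then show "\<exists>i\<in>{1..length w}. i < v z \<and> letter_at w i = a \<and> q < i"
            using some[of s] by auto
        qed
        finally show ?thesis unfolding evc evQ .
      next
        case kL: DLeft
        have "sat w v (fm d0 (p#rs) z k) = ((\<exists>i\<in>{1..length w}. letter_at w i = a \<and> q < i) \<and>
            (\<forall>i\<in>{1..length w}. v z < i \<or> letter_at w i \<noteq> a \<or> \<not> q < i))"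
          unfolding fmc using kL DRight ovz S by auto
        also have "\<dots> = sem Q k (v z)"
        proof
          assume h: "(\<exists>i\<in>{1..length w}. letter_at w i = a \<and> q < i) \<and>
            (\<forall>i\<in>{1..length w}. v z < i \<or> letter_at w i \<noteq> a \<or> \<not> q < i)"
          then obtain s where s: "Q = Some s" using none by fastforce
          then have "v z < s" using some[of s] h by auto
          then show "sem Q k (v z)" using s kL by (auto simp: sem_def)
        next
          assume "sem Q k (v z)"
          then obtain s where s: "Q = Some s" "v z < s" using kL by (auto simp: sem_def)
          have ps: "q < s" "s \<le> length w" "letter_at w s = a" "\<forall>i. q < i \<and> i < s \<longrightarrow> letter_at w i \<noteq> a"
            using some[of s] s by auto
          show "(\<exists>i\<in>{1..length w}. letter_at w i = a \<and> q < i) \<and>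
            (\<forall>i\<in>{1..length w}. v z < i \<or> letter_at w i \<noteq> a \<or> \<not> q < i)"
          proof
            show "\<exists>i\<in>{1..length w}. letter_at w i = a \<and> q < i" using ps by (intro bexI[of _ s]) auto
            show "\<forall>i\<in>{1..length w}. v z < i \<or> letter_at w i \<noteq> a \<or> \<not> q < i"
            proof (intro ballI)
              fix i assume "i \<in> {1..length w}"
              show "v z < i \<or> letter_at w i \<noteq> a \<or> \<not> q < i"
              proof (cases "v z < i")
                case False then have "i < s" using s by simp
                then show ?thesis using ps by auto
              qed simp
            qed
          qed
        qed
        finally show ?thesis unfolding evc evQ .
      qed
    next
      case DLeft
      have none: "Q = None \<longleftrightarrow> \<not>(\<exists>i. 1 \<le> i \<and> i < q \<and> letter_at w i = a)"
        unfolding Q_def DLeft by (rule relL_None)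
      have some: "\<And>s. Q = Some s \<longleftrightarrow> (1 \<le> s \<and> s < q \<and> letter_at w s = a \<and> (\<forall>i. s < i \<and> i < q \<longrightarrow> letter_at w i \<noteq> a))"
        unfolding Q_def DLeft by (rule relL_Some)
      have S: "\<And>i. i \<in> {1..length w} \<Longrightarrow> sat w (v(ov:=i)) (fm d0 rs ov d) = (i < q)"
        using IH' DLeft by simp
      show ?thesis
      proof (cases k)
        case kL: DLeft
        have "sat w v (fm d0 (p#rs) z k) = (\<exists>i\<in>{1..length w}. v z < i \<and> letter_at w i = a \<and> i < q)"
          unfolding fmc using kL DLeft ovz S by auto
        also have "\<dots> = sem Q k (v z)"
        proof
          assume "\<exists>i\<in>{1..length w}. v z < i \<and> letter_at w i = a \<and> i < q"
          then obtain i where i: "i \<in> {1..length w}" "v z < i" "letter_at w i = a" "i < q" by blast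
          then obtain s where s: "Q = Some s" using none by fastforce
          have "i \<le> s"
          proof (rule ccontr)
            assume "\<not> i \<le> s"
            then have "s < i" by simp
            then show False using some[of s] s i by auto
          qed
          then show "sem Q k (v z)" using s i kL by (auto simp: sem_def)
        next
          assume "sem Q k (v z)"
          then obtain s where "Q = Some s" "v z < s" using kL by (auto simp: sem_def)
          then show "\<exists>i\<in>{1..length w}. v z < i \<and> letter_at w i = a \<and> i < q"
            using some[of s] qb by auto
        qed
        finally show ?thesis unfolding evc evQ .
      next
        case kR: DRight
        have "sat w v (fm d0 (p#rs) z k) = ((\<exists>i\<in>{1..length w}. letter_at w i = a \<and> i < q) \<and>
            (\<forall>i\<in>{1..length w}. i < v z \<or> letter_at w i \<noteq> a \<or> \<not> i < q))"
          unfolding fmc using kR DLeft ovz S by auto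
        also have "\<dots> = sem Q k (v z)"
        proof
          assume h: "(\<exists>i\<in>{1..length w}. letter_at w i = a \<and> i < q) \<and>
            (\<forall>i\<in>{1..length w}. i < v z \<or> letter_at w i \<noteq> a \<or> \<not> i < q)"
          then obtain s where s: "Q = Some s" using none by fastforce
          then have "s < v z" using some[of s] h qb by auto
          then show "sem Q k (v z)" using s kR by (auto simp: sem_def)
        next
          assume "sem Q k (v z)"
          then obtain s where s: "Q = Some s" "s < v z" using kR by (auto simp: sem_def)
          have ps: "1 \<le> s" "s < q" "letter_at w s = a" "\<forall>i. s < i \<and> i < q \<longrightarrow> letter_at w i \<noteq> a"
            using some[of s] s by auto
          show "(\<exists>i\<in>{1..length w}. letter_at w i = a \<and> i < q) \<and>
            (\<forall>i\<in>{1..length w}. i < v z \<or> letter_at w i \<noteq> a \<or> \<not> i < q)"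
          proof
            show "\<exists>i\<in>{1..length w}. letter_at w i = a \<and> i < q" using ps qb by (intro bexI[of _ s]) auto
            show "\<forall>i\<in>{1..length w}. i < v z \<or> letter_at w i \<noteq> a \<or> \<not> i < q"
            proof (intro ballI)
              fix i assume "i \<in> {1..length w}"
              show "i < v z \<or> letter_at w i \<noteq> a \<or> \<not> i < q"
              proof (cases "i < v z")
                case False then have "s < i" using s by simp
                then show ?thesis using ps by auto
              qed simp
            qed
          qed
        qed
        finally show ?thesis unfolding evc evQ .
      qed
    qed
  qed
qed

lemma ev_foldl: "ev d0 w (rev ps @ base) = foldl (\<lambda>acc q. Option.bind acc (bpos_rel w q)) (ev d0 w base) ps"
  by (induction ps arbitrary: base) auto

lemma ev_single: "ev d0 w [(d0,a)] = bpos_abs w (d0,a)"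
  by (cases d0) (auto simp: bpos_rel.simps)

lemma ranker_ev: "ranker_eval w ((d0,a)#ps) = ev d0 w (rev ((d0,a)#ps))"
  using ev_foldl[of d0 w ps "[(d0,a)]"] ev_single[of d0 w a] by simp

lemma dir_blocks_nb: "dir_blocks r = nb (rev r)"
  by (simp add: dir_blocks_def nb_def rev_map[symmetric])

theorem lemma4p3:
  fixes m n :: nat and r :: "('a::finite) ranker"
  assumes "0 < m" and "m \<le> n" and "is_mn_ranker m n r"
  shows "\<exists>\<phi> :: 'a fo2. \<phi> \<in> FO2_mn m n \<and> sentence \<phi> \<and>
           (\<forall>w :: 'a list. models w \<phi> \<longleftrightarrow> ranker_eval w r \<noteq> None)"
proof -
  have len: "length r = n" and mb: "dir_blocks r = m" using assms(3) by (auto simp: is_mn_ranker_def)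
  then have "r \<noteq> []" using assms by auto
  then obtain d0 a0 ps where r: "r = (d0,a0)#ps" by (metis list.exhaust prod.exhaust)
  have "rev r \<noteq> []" using \<open>r \<noteq> []\<close> by simp
  then obtain d a rs where rr: "rev r = (d,a)#rs" by (metis list.exhaust prod.exhaust)
  define \<phi> :: "'a fo2" where "\<phi> = Ex VX (And (Letter a VX) (fm d0 rs VX d))"
  have lrs: "Suc (length rs) = n" using len rr by (metis length_Cons length_rev)
  have m: "nb ((d,a)#rs) = m" using mb rr dir_blocks_nb by metis
  have dep: "qdepth \<phi> \<le> n" using depth_fm[of d0 rs VX d] lrs by (simp add: \<phi>_def)
  have e: "qblocks_aux (Some QEx) (fm d0 rs VX d) \<le> m - 1"
  proof (cases "rs \<noteq> [] \<and> d = hdd d0 rs")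
    case True
    then have "nb ((d,a)#rs) = nb rs" using nb_Cons[of d a rs d0] by simp
    then show ?thesis using True qb_fm[of d0 rs VX] m by simp
  next
    case False
    then have "nb ((d,a)#rs) = Suc (nb rs)" using nb_Cons[of d a rs d0] by auto
    then show ?thesis using qb_fm[of d0 rs VX d] m by simp
  qed
  have bl: "qblocks \<phi> \<le> m" using e assms(1) by (simp add: \<phi>_def qblocks_def)
  have sen: "sentence \<phi>" using fv_fm[of d0 rs VX d] by (auto simp: \<phi>_def sentence_def)
  have sem_ok: "models w \<phi> \<longleftrightarrow> ranker_eval w r \<noteq> None" for w
  proof -
    have "models w \<phi> \<longleftrightarrow> (\<exists>j\<in>{1..length w}. letter_at w j = a \<and> sem (ev d0 w rs) d j)"
      unfolding models_def \<phi>_def using sat_fm[of "(\<lambda>_. 0)(VX := _)" VX w d0 rs d] by auto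
    also have "\<dots> \<longleftrightarrow> Option.bind (ev d0 w rs) (bpos_rel w (d,a)) \<noteq> None"
    proof (cases "ev d0 w rs")
      case None then show ?thesis by (simp add: sem_def)
    next
      case (Some q)
      have qb: "q \<le> length w + 1" using ev_bound Some by metis
      show ?thesis
      proof (cases d)
        case DRight then show ?thesis using Some relR_None[of w a q]
          by (auto simp: sem_def)
      next
        case DLeft then show ?thesis using Some relL_None[of w a q] qb
          by (auto simp: sem_def)
      qed
    qed
    also have "\<dots> \<longleftrightarrow> ranker_eval w r \<noteq> None"
      using ranker_ev[of w d0 a0 ps] r rr by simp
    finally show ?thesis .
  qed
  show ?thesis using dep bl sen sem_ok by (auto simp: FO2_mn_def)
qed

end
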